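(* With the notation of the context, let $\mathcal{X}/\mathcal{S}$ be the projective closure in the weighted projective space $\mathbb{P}(1,3,1)$ over $\mathcal{S}=\operatorname{Spec}k[[\epsilon]]$ of $\operatorname{Spec}\big(R[x,y]/(y^2+\det(Q_1(\epsilon)+2xQ_2(\epsilon)+x^2Q_3(\epsilon)))\big)$, where $R=k[[\epsilon]]$ and each quadratic form is identified with its symmetric $3\times 3$ matrix. Then $\mathcal{X}$ is smooth over $\mathcal{S}$ with geometrically connected fibres. In particular its special fiber $X$, the curve $y^2=-\det(q_1+2xq_2+x^2q_3)$, is smooth.
   Context: $k$ is a field of characteristic $\neq 2$; $f=f_2x^2+f_1xz+f_0z^2$, $g=g_2x^2+g_1xz+g_0z^2$, $h=h_2x^2+h_1xz+h_0z^2\in k[x,z]$ are such that $C: y^4-h(x,z)y^2+f(x,z)g(x,z)=0\subset\mathbb{P}^2$ is a smooth non-hyperelliptic genus-$3$ curve, the curve $D: y^2-h(x,z)y+f(x,z)g(x,z)=0$ in $\mathbb{P}(1,2,1)$ is smooth of genus $1$, and $A=\begin{bmatrix} f_2 & f_1 & f_0 \\ h_2 & h_1 & h_0 \\ g_2 & g_1 & g_0 \end{bmatrix}$ is invertible. The quadratic forms $q_1,q_2,q_3\in k[x_1,x_2,x_3]$ are defined by $(q_1,q_2,q_3)^T=A^{-1}(x_1x_2,\;x_2^2+x_1x_3,\;x_2x_3)^T$, and $Q_1(\epsilon)=q_1+\epsilon((x_2^2+x_3^2)-q_1)$, $Q_2(\epsilon)=q_2+\epsilon(x_1^2-q_2)$,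 $Q_3(\epsilon)=q_3+\epsilon((x_2^2-x_3^2)-q_3)$. *)

theory Defs
  imports "HOL-Analysis.Analysis" "HOL-Computational_Algebra.Computational_Algebra"
begin

definition alg_closed_type :: "'K::field itself \<Rightarrow> bool" where
  "alg_closed_type T \<longleftrightarrow> (\<forall>p::'K poly. degree p > 0 \<longrightarrow> (\<exists>x. poly p x = 0))"

(* ring homomorphism between fields (automatically an embedding) *)
definition field_hom :: "('a::field \<Rightarrow> 'b::field) \<Rightarrow> bool" where
  "field_hom \<phi> \<longleftrightarrow> \<phi> 1 = 1 \<and> (\<forall>a b. \<phi> (a + b) = \<phi> a + \<phi> b \<and> \<phi> (a * b) = \<phi> a * \<phi> b)"

definition map_mat :: "('a \<Rightarrow> 'b) \<Rightarrow> 'a^3^3 \<Rightarrow> 'b^3^3" where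
  "map_mat \<phi> M = (\<chi> i j. \<phi> (M$i$j))"

definition smat :: "'a::times \<Rightarrow> 'a^3^3 \<Rightarrow> 'a^3^3" where
  "smat c M = (\<chi> i j. c * M$i$j)"

(* symmetric matrix of the ternary quadratic form
   a11 x1^2 + a22 x2^2 + a33 x3^2 + a12 x1 x2 + a13 x1 x3 + a23 x2 x3 *)
definition qmat :: "'a::field \<Rightarrow> 'a \<Rightarrow> 'a \<Rightarrow> 'a \<Rightarrow> 'a \<Rightarrow> 'a \<Rightarrow> 'a^3^3" where
  "qmat a11 a22 a33 a12 a13 a23 =
     vector [vector [a11, a12/2, a13/2], vector [a12/2, a22, a23/2], vector [a13/2, a23/2, a33]]"

definition bq :: "'a::comm_ring_1 \<Rightarrow> 'a \<Rightarrow> 'a \<Rightarrow> 'a \<Rightarrow> 'a \<Rightarrow> 'a" where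
  "bq a2 a1 a0 x z = a2 * x^2 + a1 * x * z + a0 * z^2"

definition quartic_C_smooth ::
  "'K::field \<Rightarrow> 'K \<Rightarrow> 'K \<Rightarrow> 'K \<Rightarrow> 'K \<Rightarrow> 'K \<Rightarrow> 'K \<Rightarrow> 'K \<Rightarrow> 'K \<Rightarrow> bool" where
  "quartic_C_smooth f2 f1 f0 h2 h1 h0 g2 g1 g0 \<longleftrightarrow>
    \<not> (\<exists>x y z. (x, y, z) \<noteq> (0, 0, 0) \<and>
        (let f = bq f2 f1 f0 x z; h = bq h2 h1 h0 x z; g = bq g2 g1 g0 x z;
             fx = 2*f2*x + f1*z; hx = 2*h2*x + h1*z; gx = 2*g2*x + g1*z;
             fz = f1*x + 2*f0*z; hz = h1*x + 2*h0*z; gz = g1*x + 2*g0*z in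
         y^4 - h * y^2 + f * g = 0 \<and>
         - hx * y^2 + fx * g + f * gx = 0 \<and>
         4 * y^3 - 2 * h * y = 0 \<and>
         - hz * y^2 + fz * g + f * gz = 0))"

(* Smoothness of D : y^2 - h y + f g = 0 in the weighted projective plane P(1,2,1)(K)
   (y of weight 2): no point (x:y:z), (x,z) \<noteq> (0,0), where the weighted-homogeneous
   form and all its partial derivatives vanish. *)
definition curve_D_smooth ::
  "'K::field \<Rightarrow> 'K \<Rightarrow> 'K \<Rightarrow> 'K \<Rightarrow> 'K \<Rightarrow> 'K \<Rightarrow> 'K \<Rightarrow> 'K \<Rightarrow> 'K \<Rightarrow> bool" where
  "curve_D_smooth f2 f1 f0 h2 h1 h0 g2 g1 g0 \<longleftrightarrow>
    \<not> (\<exists>x y z. (x, z) \<noteq> (0, 0) \<and>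
        (let f = bq f2 f1 f0 x z; h = bq h2 h1 h0 x z; g = bq g2 g1 g0 x z;
             fx = 2*f2*x + f1*z; hx = 2*h2*x + h1*z; gx = 2*g2*x + g1*z;
             fz = f1*x + 2*f0*z; hz = h1*x + 2*h0*z; gz = g1*x + 2*g0*z in
         y^2 - h * y + f * g = 0 \<and>
         - hx * y + fx * g + f * gx = 0 \<and>
         2 * y - h = 0 \<and>
         - hz * y + fz * g + f * gz = 0))"

(* For symmetric 3x3 matrices Q1 Q2 Q3 over K, the projective closure in P(1,3,1)
   of  y^2 + det(Q1 + 2 x Q2 + x^2 Q3) = 0  is  y^2 + det(z^2 Q1 + 2 x z Q2 + x^2 Q3) = 0.
   Its two affine charts z = 1 and x = 1 cover it (x = z = 0 forces y = 0).
   chart_z1: the polynomial det(Q1 + 2 x Q2 + x^2 Q3) in x;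
   chart_x1: the polynomial det(z^2 Q1 + 2 z Q2 + Q3) in z. *)
definition chart_z1 :: "'K::field^3^3 \<Rightarrow> 'K^3^3 \<Rightarrow> 'K^3^3 \<Rightarrow> 'K poly" where
  "chart_z1 Q1 Q2 Q3 = det (\<chi> i j. [: Q1$i$j, 2 * Q2$i$j, Q3$i$j :])"

definition chart_x1 :: "'K::field^3^3 \<Rightarrow> 'K^3^3 \<Rightarrow> 'K^3^3 \<Rightarrow> 'K poly" where
  "chart_x1 Q1 Q2 Q3 = det (\<chi> i j. [: Q3$i$j, 2 * Q2$i$j, Q1$i$j :])"

definition affine_dc_smooth :: "'K::field poly \<Rightarrow> bool" where
  "affine_dc_smooth p \<longleftrightarrow>
     \<not> (\<exists>t y. y^2 + poly p t = 0 \<and> 2 * y = 0 \<and> poly (pderiv p) t = 0)"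

definition X_smooth :: "'K::field^3^3 \<Rightarrow> 'K^3^3 \<Rightarrow> 'K^3^3 \<Rightarrow> bool" where
  "X_smooth Q1 Q2 Q3 \<longleftrightarrow>
     affine_dc_smooth (chart_z1 Q1 Q2 Q3) \<and> affine_dc_smooth (chart_x1 Q1 Q2 Q3)"

(* connectedness of the double cover y^2 = -det(...) over an algebraically closed
   field: the curve splits into the two components y = +-G exactly when
   -det(Q1 + 2xQ2 + x^2Q3) is the square of a polynomial. *)
definition X_connected :: "'K::field^3^3 \<Rightarrow> 'K^3^3 \<Rightarrow> 'K^3^3 \<Rightarrow> bool" where
  "X_connected Q1 Q2 Q3 \<longleftrightarrow> \<not> (\<exists>G. - chart_z1 Q1 Q2 Q3 = G^2)"

definition Qeps :: "'a::field^3^3 \<Rightarrow> 'a^3^3 \<Rightarrow> 'a fls^3^3" where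
  "Qeps q D = map_mat fls_const q + smat fls_X (map_mat fls_const D - map_mat fls_const q)"

end

theory Submission
  imports Defs
begin


section \<open>General homomorphism facts\<close>

lemma fh_1: "field_hom h \<Longrightarrow> h 1 = 1" by (simp add: field_hom_def)
lemma fh_add: "field_hom h \<Longrightarrow> h (a + b) = h a + h b" by (simp add: field_hom_def)
lemma fh_mult: "field_hom h \<Longrightarrow> h (a * b) = h a * h b" by (simp add: field_hom_def)
lemma fh_0: "field_hom h \<Longrightarrow> h 0 = 0"
proof -
  assume a: "field_hom h"
  have "h (0 + 0) = h 0 + h 0" using fh_add[OF a] .
  then have "h 0 + h 0 = h 0 + 0" by simp
  then show ?thesis by (simp only: add_left_cancel)
qed
lemma fh_uminus: "field_hom h \<Longrightarrow> h (- a) = - h a"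
proof -
  assume a: "field_hom h"
  have "h (a + - a) = h a + h (- a)" using fh_add[OF a] .
  then show ?thesis using fh_0[OF a] by (simp add: eq_neg_iff_add_eq_0 add.commute)
qed
lemma fh_diff: "field_hom h \<Longrightarrow> h (a - b) = h a - h b"
  using fh_add[of h a "-b"] fh_uminus[of h b] by simp
lemma fh_nz: "field_hom h \<Longrightarrow> a \<noteq> 0 \<Longrightarrow> h a \<noteq> 0"
proof
  assume a: "field_hom h" "a \<noteq> 0" "h a = 0"
  have "h (a * inverse a) = h a * h (inverse a)" using fh_mult[OF a(1)] .
  then show False using a fh_1[OF a(1)] by simp
qed
lemma fh_inj: "field_hom h \<Longrightarrow> h a = h b \<Longrightarrow> a = b"
  using fh_nz[of h "a - b"] fh_diff[of h a b] by auto
lemma fh_inverse: "field_hom h \<Longrightarrow> h (inverse a) = inverse (h a)"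
proof (cases "a = 0")
  case True
  assume a: "field_hom h" then show ?thesis using True fh_0[OF a] by simp
next
  case False
  assume a: "field_hom h"
  have "h (a * inverse a) = h a * h (inverse a)" using fh_mult[OF a] .
  then have "h a * h (inverse a) = 1" using False fh_1[OF a] by simp
  then show ?thesis by (simp add: inverse_unique)
qed
lemma fh_divide: "field_hom h \<Longrightarrow> h (a / b) = h a / h b"
  by (simp add: divide_inverse fh_mult fh_inverse)
lemma fh_of_nat: "field_hom h \<Longrightarrow> h (of_nat n) = of_nat n"
  by (induction n) (simp_all add: fh_0 fh_1 fh_add)
lemma fh_numeral: "field_hom h \<Longrightarrow> h (numeral n) = numeral n"
  using fh_of_nat[of h "numeral n"] by simp
lemma fh_2: "field_hom h \<Longrightarrow> h 2 = 2" using fh_numeral[of h "num.Bit0 num.One"] by simp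

lemma hom_sum:
  assumes "h 0 = 0" "\<And>x y. h (x + y) = h x + h y"
  shows "h (sum f A) = sum (\<lambda>x. h (f x)) A"
  by (induction A rule: infinite_finite_induct) (simp_all add: assms)

lemma det3_hom:
  fixes h :: "'a::comm_ring_1 \<Rightarrow> 'b::comm_ring_1" and M :: "'a^3^3"
  assumes add: "\<And>x y. h (x + y) = h x + h y" and diff: "\<And>x y. h (x - y) = h x - h y"
    and mult: "\<And>x y. h (x * y) = h x * h y"
  shows "h (det M) = det (\<chi> i j. h (M$i$j))"
  unfolding det_3 by (simp add: add diff mult)

lemma map_poly_add_hom:
  assumes "h 0 = 0" "\<And>x y. h (x + y) = h x + h y"
  shows "map_poly h (p + q) = map_poly h p + map_poly h q"
  by (rule poly_eqI) (simp add: coeff_map_poly assms)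

lemma map_poly_diff_hom:
  assumes "h 0 = 0" "\<And>x y. h (x - y) = h x - h y"
  shows "map_poly h (p - q) = map_poly h p - map_poly h q"
  by (rule poly_eqI) (simp add: coeff_map_poly assms)

lemma map_poly_mult_hom:
  assumes "h 0 = 0" "\<And>x y. h (x + y) = h x + h y" "\<And>x y. h (x * y) = h x * h y"
  shows "map_poly h (p * q) = map_poly h p * map_poly h q"
  by (rule poly_eqI) (simp add: coeff_map_poly coeff_mult assms hom_sum[of h, OF assms(1,2)])

lemma map_poly_pderiv_hom:
  assumes "h 0 = 0" "\<And>x y. h (x + y) = h x + h y" "\<And>x y. h (x * y) = h x * h y"
    and "\<And>n. h (of_nat n) = of_nat n"
  shows "map_poly h (pderiv p) = pderiv (map_poly h p)"
  by (rule poly_eqI) (simp add: coeff_map_poly coeff_pderiv assms del: of_nat_Suc)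

lemma poly_map_poly_hom:
  assumes "h 0 = 0" "\<And>x y. h (x + y) = h x + h y" "\<And>x y. h (x * y) = h x * h y"
  shows "poly (map_poly h p) (h x) = h (poly p x)"
proof (induction p)
  case 0 then show ?case by (simp add: assms)
next
  case (pCons a p)
  then show ?case by (simp add: map_poly_pCons assms)
qed

lemma det3_poly_hom:
  fixes h :: "'a::comm_ring_1 \<Rightarrow> 'b::comm_ring_1" and M :: "'a poly^3^3"
  assumes "h 0 = 0" "\<And>x y. h (x + y) = h x + h y" "\<And>x y. h (x - y) = h x - h y"
    "\<And>x y. h (x * y) = h x * h y"
  shows "map_poly h (det M) = det (\<chi> i j. map_poly h (M$i$j))"
  by (rule det3_hom) (simp_all add: map_poly_add_hom map_poly_diff_hom map_poly_mult_hom assms)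

lemma chart_z1_hom:
  assumes h: "field_hom h"
  shows "chart_z1 (map_mat h A) (map_mat h B) (map_mat h C) = map_poly h (chart_z1 A B C)"
proof -
  have "map_poly h (chart_z1 A B C) = det (\<chi> i j. map_poly h [: A$i$j, 2 * B$i$j, C$i$j :])"
    unfolding chart_z1_def
    by (subst det3_poly_hom) (simp_all add: fh_0[OF h] fh_add[OF h] fh_diff[OF h] fh_mult[OF h])
  also have "\<dots> = chart_z1 (map_mat h A) (map_mat h B) (map_mat h C)"
    unfolding chart_z1_def map_mat_def
    by (simp add: map_poly_pCons fh_0[OF h] fh_mult[OF h] fh_2[OF h])
  finally show ?thesis by simp
qed

lemma chart_x1_hom:
  assumes h: "field_hom h"
  shows "chart_x1 (map_mat h A) (map_mat h B) (map_mat h C) = map_poly h (chart_x1 A B C)"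
  using chart_z1_hom[OF h, of C B A] by (simp add: chart_x1_def chart_z1_def)

lemma chart_x1_swap: "chart_x1 A B C = chart_z1 C B A"
  by (simp add: chart_x1_def chart_z1_def)

lemma prod3_poly:
  fixes a1 b1 c1 a2 b2 c2 a3 b3 c3 :: "'a::comm_ring_1"
  shows "[:a1,b1,c1:] * [:a2,b2,c2:] * [:a3,b3,c3:] =
    [: a1*a2*a3, b1*a2*a3 + a1*b2*a3 + a1*a2*b3,
       c1*a2*a3 + a1*c2*a3 + a1*a2*c3 + b1*b2*a3 + b1*a2*b3 + a1*b2*b3,
       b1*b2*b3 + c1*b2*a3 + c1*a2*b3 + b1*c2*a3 + a1*c2*b3 + b1*a2*c3 + a1*b2*c3,
       c1*c2*a3 + c1*a2*c3 + a1*c2*c3 + b1*b2*c3 + b1*c2*b3 + c1*b2*b3,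
       b1*c2*c3 + c1*b2*c3 + c1*c2*b3, c1*c2*c3 :]"
  by (simp add: algebra_simps)

lemma coeff3:
  fixes a1 b1 c1 a2 b2 c2 a3 b3 c3 :: "'a::comm_ring_1"
  shows "coeff ([:a1,b1,c1:] * [:a2,b2,c2:] * [:a3,b3,c3:]) 0 = a1*a2*a3"
    "coeff ([:a1,b1,c1:] * [:a2,b2,c2:] * [:a3,b3,c3:]) 1 = b1*a2*a3 + a1*b2*a3 + a1*a2*b3"
    "coeff ([:a1,b1,c1:] * [:a2,b2,c2:] * [:a3,b3,c3:]) 5 = b1*c2*c3 + c1*b2*c3 + c1*c2*b3"
    "coeff ([:a1,b1,c1:] * [:a2,b2,c2:] * [:a3,b3,c3:]) 6 = c1*c2*c3"
  unfolding prod3_poly by (simp_all add: numeral_eq_Suc)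

lemma degree3: "degree ([:a1,b1,c1:] * [:a2,b2,c2:] * [:a3,b3,c3:]) \<le> 6"
proof -
  have "degree ([:a1,b1,c1:] * [:a2,b2,c2:] * [:a3,b3,c3:]) \<le>
     degree ([:a1,b1,c1:] * [:a2,b2,c2:]) + degree [:a3,b3,c3:]" by (rule degree_mult_le)
  also have "\<dots> \<le> degree [:a1,b1,c1:] + degree [:a2,b2,c2:] + degree [:a3,b3,c3:]"
    using degree_mult_le[of "[:a1,b1,c1:]" "[:a2,b2,c2:]"] by simp
  also have "\<dots> \<le> 6" using degree_pCons_le[of a1 "[:b1,c1:]"] degree_pCons_le[of a2 "[:b2,c2:]"]
      degree_pCons_le[of a3 "[:b3,c3:]"] degree_pCons_le[of b1 "[:c1:]"] degree_pCons_le[of b2 "[:c2:]"]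
      degree_pCons_le[of b3 "[:c3:]"] by auto
  finally show ?thesis .
qed

lemma chart_z1_degree: "degree (chart_z1 A B C) \<le> 6"
  unfolding chart_z1_def det_3
  by (simp del: pCons_0_0 add: degree3 degree_add_le degree_diff_le)

lemma chart_z1_coeff_swap:
  "coeff (chart_z1 C B A) 6 = coeff (chart_z1 A B C) 0"
  "coeff (chart_z1 C B A) 5 = coeff (chart_z1 A B C) 1"
  unfolding chart_z1_def det_3 vec_lambda_beta coeff_add coeff_diff coeff3
  by (simp_all add: algebra_simps)

section \<open>The special fibre\<close>

lemma C_notsmooth:
  fixes F2 F1 F0 H2 H1 H0 G2 G1 G0 x z :: "'K::field"
  assumes "z \<noteq> 0"
    and "bq F2 F1 F0 x z * bq G2 G1 G0 x z = 0"
    and "(2*F2*x + F1*z) * bq G2 G1 G0 x z + bq F2 F1 F0 x z * (2*G2*x + G1*z) = 0"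
    and "(F1*x + 2*F0*z) * bq G2 G1 G0 x z + bq F2 F1 F0 x z * (G1*x + 2*G0*z) = 0"
  shows "\<not> quartic_C_smooth F2 F1 F0 H2 H1 H0 G2 G1 G0"
  unfolding quartic_C_smooth_def
  by (rule notI, erule notE, rule exI[of _ x], rule exI[of _ 0], rule exI[of _ z])
     (use assms in \<open>simp add: Let_def\<close>)

lemma D_notsmooth:
  fixes F2 F1 F0 H2 H1 H0 G2 G1 G0 x y z :: "'K::field"
  assumes "z \<noteq> 0"
    and "y^2 - bq H2 H1 H0 x z * y + bq F2 F1 F0 x z * bq G2 G1 G0 x z = 0"
    and "- (2*H2*x + H1*z) * y + (2*F2*x + F1*z) * bq G2 G1 G0 x z + bq F2 F1 F0 x z * (2*G2*x + G1*z) = 0"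
    and "2 * y - bq H2 H1 H0 x z = 0"
    and "- (H1*x + 2*H0*z) * y + (F1*x + 2*F0*z) * bq G2 G1 G0 x z + bq F2 F1 F0 x z * (G1*x + 2*G0*z) = 0"
  shows "\<not> curve_D_smooth F2 F1 F0 H2 H1 H0 G2 G1 G0"
  unfolding curve_D_smooth_def
  by (rule notI, erule notE, rule exI[of _ x], rule exI[of _ y], rule exI[of _ z])
     (use assms in \<open>simp add: Let_def algebra_simps\<close>)

lemma core_cases:
  fixes F2 F1 F0 H2 H1 H0 G2 G1 G0 t a b c a' b' c' :: "'K::field"
  assumes two: "(2::'K) \<noteq> 0"
    and Cs: "quartic_C_smooth F2 F1 F0 H2 H1 H0 G2 G1 G0"
    and Ds: "curve_D_smooth F2 F1 F0 H2 H1 H0 G2 G1 G0"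
    and C1: "a*F2 + b*H2 + c*G2 = 1" and C2: "a*F1 + b*H1 + c*G1 = 2*t"
    and C3: "a*F0 + b*H0 + c*G0 = t^2"
    and D1: "a'*F2 + b'*H2 + c'*G2 = 0" and D2: "a'*F1 + b'*H1 + c'*G1 = 2"
    and D3: "a'*F0 + b'*H0 + c'*G0 = 2*t"
    and P: "b*(a*c - b^2) = 0" and P': "b'*(a*c - b^2) + b*(a'*c + a*c' - 2*b*b') = 0"
  shows False
proof -
  define x :: 'K where "x = - t"
  define fv where "fv = bq F2 F1 F0 x 1"
  define hv where "hv = bq H2 H1 H0 x 1"
  define gv where "gv = bq G2 G1 G0 x 1"
  define fx where "fx = 2*F2*x + F1*1"
  define hx where "hx = 2*H2*x + H1*1"
  define gx where "gx = 2*G2*x + G1*1"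
  define fz where "fz = F1*x + 2*F0*1"
  define hz where "hz = H1*x + 2*H0*1"
  define gz where "gz = G1*x + 2*G0*1"
  have V0: "a*fv + b*hv + c*gv = 0"
  proof -
    have "a*fv + b*hv + c*gv = t^2 * (a*F2 + b*H2 + c*G2) - t * (a*F1 + b*H1 + c*G1) + (a*F0 + b*H0 + c*G0)"
      by (simp add: fv_def hv_def gv_def bq_def x_def algebra_simps power2_eq_square)
    then show ?thesis using C1 C2 C3 by (simp add: power2_eq_square)
  qed
  have Vx: "a*fx + b*hx + c*gx = 0"
  proof -
    have "a*fx + b*hx + c*gx = -2*t * (a*F2 + b*H2 + c*G2) + (a*F1 + b*H1 + c*G1)"
      by (simp add: fx_def hx_def gx_def x_def algebra_simps)
    then show ?thesis using C1 C2 by simp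
  qed
  have Vz: "a*fz + b*hz + c*gz = 0"
  proof -
    have "a*fz + b*hz + c*gz = - t * (a*F1 + b*H1 + c*G1) + 2 * (a*F0 + b*H0 + c*G0)"
      by (simp add: fz_def hz_def gz_def x_def algebra_simps)
    then show ?thesis using C2 C3 by (simp add: power2_eq_square)
  qed
  have V1: "a'*fv + b'*hv + c'*gv = 0"
  proof -
    have "a'*fv + b'*hv + c'*gv = t^2 * (a'*F2 + b'*H2 + c'*G2) - t * (a'*F1 + b'*H1 + c'*G1) + (a'*F0 + b'*H0 + c'*G0)"
      by (simp add: fv_def hv_def gv_def bq_def x_def algebra_simps power2_eq_square)
    then show ?thesis using D1 D2 D3 by (simp add: power2_eq_square)
  qed
  have Csing: False if "gv = 0" "gx = 0" "gz = 0"
  proof -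
    have "\<not> quartic_C_smooth F2 F1 F0 H2 H1 H0 G2 G1 G0"
      by (rule C_notsmooth[of 1 _ _ _ x]) (use that in \<open>simp_all add: fv_def gv_def fx_def gx_def fz_def gz_def\<close>)
    then show False using Cs by simp
  qed
  have Csing2: False if "fv = 0" "fx = 0" "fz = 0"
  proof -
    have "\<not> quartic_C_smooth F2 F1 F0 H2 H1 H0 G2 G1 G0"
      by (rule C_notsmooth[of 1 _ _ _ x]) (use that in \<open>simp_all add: fv_def gv_def fx_def gx_def fz_def gz_def\<close>)
    then show False using Cs by simp
  qed
  have Csing3: False if "fv = 0" "gv = 0"
  proof -
    have "\<not> quartic_C_smooth F2 F1 F0 H2 H1 H0 G2 G1 G0"
      by (rule C_notsmooth[of 1 _ _ _ x]) (use that in \<open>simp_all add: fv_def gv_def fx_def gx_def fz_def gz_def\<close>)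
    then show False using Cs by simp
  qed
  show False
  proof (cases "b = 0")
    case True
    then have P'': "b' * (a*c) = 0" using P' by (simp add: power2_eq_square)
    show False
    proof (cases "a = 0")
      case True
      with \<open>b = 0\<close> have "c * G2 = 1" "c*gv = 0" "c*gx = 0" "c*gz = 0" using C1 V0 Vx Vz by auto
      then have "c \<noteq> 0" by auto
      then show False using Csing \<open>c*gv = 0\<close> \<open>c*gx = 0\<close> \<open>c*gz = 0\<close> by simp
    next
      case a0: False
      show False
      proof (cases "c = 0")
        case True
        with \<open>b = 0\<close> have "a * F2 = 1" "a*fv = 0" "a*fx = 0" "a*fz = 0" using C1 V0 Vx Vz by auto
        then show False using Csing2 a0 by simp
      next
        case c0: False
        with a0 P'' have b'0: "b' = 0" by simp
        have e1: "a*fv + c*gv = 0" using V0 \<open>b = 0\<close> by simp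
        have e2: "a'*fv + c'*gv = 0" using V1 b'0 by simp
        show False
        proof (cases "a*c' - c*a' = 0")
          case False
          have "(a*c' - c*a') * fv = c' * (a*fv + c*gv) - c * (a'*fv + c'*gv)" by (simp add: algebra_simps)
          then have "fv = 0" using e1 e2 False by simp
          moreover have "(a*c' - c*a') * gv = a * (a'*fv + c'*gv) - a' * (a*fv + c*gv)" by (simp add: algebra_simps)
          then have "gv = 0" using e1 e2 False by simp
          ultimately show False using Csing3 by simp
        next
          case True
          have f1: "a*F2 + c*G2 = 1" "a'*F2 + c'*G2 = 0" using C1 D1 \<open>b = 0\<close> b'0 by simp_all
          have z1: "a'*c - a*c' = 0" "c'*a - c*a' = 0" using True by (simp_all add: algebra_simps)
          have "(a'*c - a*c') * G2 = a' * (a*F2 + c*G2) - a * (a'*F2 + c'*G2)" by (simp add: algebra_simps)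
          then have "a' = 0" using f1 z1 by simp
          have "(c'*a - c*a') * F2 = c' * (a*F2 + c*G2) - c * (a'*F2 + c'*G2)" by (simp add: algebra_simps)
          then have "c' = 0" using f1 z1 by simp
          then show False using D2 \<open>a' = 0\<close> b'0 two by simp
        qed
      qed
    qed
  next
    case b0: False
    have acb: "a*c = b^2" using P b0 by simp
    have c0: "c \<noteq> 0" using acb b0 by auto
    have tan: "a'*c + a*c' - 2*b*b' = 0" using P' acb b0 by simp
    have key: "2*b*fv + c*hv = 0"
    proof (cases "b'*c - c'*b = 0")
      case False
      have "c * (a'*fv + b'*hv + c'*gv) = fv*(a'*c - c'*a) + hv*(b'*c - c'*b) + c' * (a*fv + b*hv + c*gv)"
        by (simp add: algebra_simps)
      then have h1: "fv*(a'*c - c'*a) + hv*(b'*c - c'*b) = 0" using V0 V1 by simp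
      have "c * (fv*(a'*c - c'*a) + hv*(b'*c - c'*b)) = (b'*c - c'*b) * (2*b*fv + c*hv) + fv * c * (a'*c + a*c' - 2*b*b') + 2 * fv * c' * (b^2 - a*c)"
        by (simp add: algebra_simps power2_eq_square)
      then have "(b'*c - c'*b) * (2*b*fv + c*hv) = 0" using h1 tan acb by simp
      then show ?thesis using False by simp
    next
      case True
      have "c * (a'*c - c'*a) = (a'*c + a*c' - 2*b*b') * c + 2*b*(b'*c - c'*b) + 2 * c' * (b^2 - a*c)"
        by (simp add: algebra_simps power2_eq_square)
      then have "c * (a'*c - c'*a) = 0" using True tan acb by simp
      then have ac': "a'*c - c'*a = 0" using c0 by simp
      have "c * (a'*F2 + b'*H2 + c'*G2) - c' * (a*F2 + b*H2 + c*G2) = (a'*c - c'*a)*F2 + (b'*c - c'*b)*H2"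
        by (simp add: algebra_simps)
      then have "c' = 0" using ac' True C1 D1 by simp
      then have "a' = 0" "b' = 0" using ac' True c0 by simp_all
      then show ?thesis using D2 \<open>c' = 0\<close> two by simp
    qed
    define y where "y = - b * fv / c"
    have cy: "c * y = - b * fv" using c0 by (simp add: y_def)
    have hv2: "hv = 2 * y"
    proof -
      have "c * hv = (2*b*fv + c*hv) - 2*b*fv" by simp
      also have "\<dots> = - 2*b*fv" using key by simp
      also have "\<dots> = 2 * (c*y)" using cy by simp
      finally have "c * hv = c * (2 * y)" by simp
      then show ?thesis using c0 by simp
    qed
    have "c * gv = (a*fv + b*hv + c*gv) - a*fv - b*hv" by simp
    then have cg: "c * gv = - a*fv - b*hv" using V0 by simp
    have E1: "y^2 - hv * y + fv * gv = 0"
    proof -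
      have "c^2 * (y^2 - hv * y + fv * gv) = (c*y)^2 - c*hv*(c*y) + c*fv*(c*gv)"
        by (simp add: algebra_simps power2_eq_square)
      also have "\<dots> = fv^2 * (b^2 - a*c)"
        unfolding cy cg by (simp add: algebra_simps power2_eq_square)
      also have "\<dots> = 0" using acb by simp
      finally show ?thesis using c0 by simp
    qed
    have E2: "- hx * y + fx * gv + fv * gx = 0"
    proof -
      have "c^2 * (- hx * y + fx * gv + fv * gx) = - c*hx*(c*y) + c*fx*(c*gv) + c^2*fv*gx"
        by (simp add: algebra_simps power2_eq_square)
      also have "\<dots> = c*fv*(a*fx + b*hx + c*gx) + 2*fv*fx*(b^2 - a*c) - b*fx*(2*b*fv + c*hv)"
        unfolding cy cg by (simp add: algebra_simps power2_eq_square)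
      also have "\<dots> = 0" using acb key Vx by (simp add: power2_eq_square)
      finally show ?thesis using c0 by simp
    qed
    have E4: "- hz * y + fz * gv + fv * gz = 0"
    proof -
      have "c^2 * (- hz * y + fz * gv + fv * gz) = - c*hz*(c*y) + c*fz*(c*gv) + c^2*fv*gz"
        by (simp add: algebra_simps power2_eq_square)
      also have "\<dots> = c*fv*(a*fz + b*hz + c*gz) + 2*fv*fz*(b^2 - a*c) - b*fz*(2*b*fv + c*hv)"
        unfolding cy cg by (simp add: algebra_simps power2_eq_square)
      also have "\<dots> = 0" using acb key Vz by (simp add: power2_eq_square)
      finally show ?thesis using c0 by simp
    qed
    have "\<not> curve_D_smooth F2 F1 F0 H2 H1 H0 G2 G1 G0"
      by (rule D_notsmooth[where z=1 and x=x and y=y])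
         (use E1 E2 E4 hv2 in \<open>simp_all add: fv_def gv_def hv_def fx_def gx_def hx_def fz_def gz_def hz_def\<close>)
    then show False using Ds by simp
  qed
qed


lemma core:
  fixes F2 F1 F0 H2 H1 H0 G2 G1 G0 :: "'K::field" and Q1 Q2 Q3 :: "'K^3^3"
  assumes two: "(2::'K) \<noteq> 0"
    and Cs: "quartic_C_smooth F2 F1 F0 H2 H1 H0 G2 G1 G0"
    and Ds: "curve_D_smooth F2 F1 F0 H2 H1 H0 G2 G1 G0"
    and e1: "smat F2 Q1 + smat F1 Q2 + smat F0 Q3 = qmat 0 0 0 1 0 0"
    and e2: "smat H2 Q1 + smat H1 Q2 + smat H0 Q3 = qmat 0 1 0 0 1 0"
    and e3: "smat G2 Q1 + smat G1 Q2 + smat G0 Q3 = qmat 0 0 0 0 0 1"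
  shows "affine_dc_smooth (chart_z1 Q1 Q2 Q3)"
proof -
  have ent1: "F2 * Q1$r$s + F1 * Q2$r$s + F0 * Q3$r$s = qmat 0 0 0 1 0 0 $r$s" for r s
  proof -
    have "(smat F2 Q1 + smat F1 Q2 + smat F0 Q3)$r$s = qmat 0 0 0 1 0 0 $r$s" using e1 by simp
    then show ?thesis by (simp add: smat_def)
  qed
  have ent2: "H2 * Q1$r$s + H1 * Q2$r$s + H0 * Q3$r$s = qmat 0 1 0 0 1 0 $r$s" for r s
  proof -
    have "(smat H2 Q1 + smat H1 Q2 + smat H0 Q3)$r$s = qmat 0 1 0 0 1 0 $r$s" using e2 by simp
    then show ?thesis by (simp add: smat_def)
  qed
  have ent3: "G2 * Q1$r$s + G1 * Q2$r$s + G0 * Q3$r$s = qmat 0 0 0 0 0 1 $r$s" for r s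
  proof -
    have "(smat G2 Q1 + smat G1 Q2 + smat G0 Q3)$r$s = qmat 0 0 0 0 0 1 $r$s" using e3 by simp
    then show ?thesis by (simp add: smat_def)
  qed
  define A where "A = (vector [vector [F2,F1,F0], vector [H2,H1,H0], vector [G2,G1,G0]] :: 'K^3^3)"
  define u1 where "u1 = Q1$1$2"
  define u2 where "u2 = Q2$1$2"
  define u3 where "u3 = Q3$1$2"
  define n1 where "n1 = Q1$2$2"
  define n2 where "n2 = Q2$2$2"
  define n3 where "n3 = Q3$2$2"
  define w1 where "w1 = Q1$2$3"
  define w2 where "w2 = Q2$2$3"
  define w3 where "w3 = Q3$2$3"
  define B where "B = (vector [vector [2*u1, n1, 2*w1], vector [2*u2, n2, 2*w2],
      vector [2*u3, n3, 2*w3]] :: 'K^3^3)"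
  have lin2: "\<And>a b c x y z :: 'K. a*(2*x) + b*(2*y) + c*(2*z) = 2*(a*x+b*y+c*z)"
    by (simp add: algebra_simps)
  have ent1': "F2*(2*Q1$r$s) + F1*(2*Q2$r$s) + F0*(2*Q3$r$s) = 2 * qmat 0 0 0 1 0 0 $r$s" for r s
    by (simp only: lin2 ent1)
  have ent2': "H2*(2*Q1$r$s) + H1*(2*Q2$r$s) + H0*(2*Q3$r$s) = 2 * qmat 0 1 0 0 1 0 $r$s" for r s
    by (simp only: lin2 ent2)
  have ent3': "G2*(2*Q1$r$s) + G1*(2*Q2$r$s) + G0*(2*Q3$r$s) = 2 * qmat 0 0 0 0 0 1 $r$s" for r s
    by (simp only: lin2 ent3)
  have AB: "A ** B = mat 1"
    unfolding A_def B_def u1_def u2_def u3_def n1_def n2_def n3_def w1_def w2_def w3_def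
    by (simp add: vec_eq_iff forall_3 matrix_matrix_mult_def sum_3 mat_def ent1 ent2 ent3 ent1' ent2' ent3' qmat_def two)
  have BA: "B ** A = mat 1" using matrix_left_right_inverse1[OF AB] .
  have inv: "v = B *v (A *v v)" for v using BA by (metis matrix_vector_mul_assoc matrix_vector_mul_lid)
  have entry: "vector [Q1$r$s, Q2$r$s, Q3$r$s] = B *v vector [qmat 0 0 0 1 0 0 $r$s, qmat 0 1 0 0 1 0 $r$s, qmat 0 0 0 0 0 1 $r$s]" for r s
  proof -
    have "A *v vector [Q1$r$s, Q2$r$s, Q3$r$s] = vector [qmat 0 0 0 1 0 0 $r$s, qmat 0 1 0 0 1 0 $r$s, qmat 0 0 0 0 0 1 $r$s]"
      unfolding A_def by (simp add: vec_eq_iff forall_3 matrix_vector_mult_def sum_3 ent1 ent2 ent3)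
    then show ?thesis using inv by metis
  qed
  have comp: "Q1$r$s = (B *v w)$1 \<and> Q2$r$s = (B *v w)$2 \<and> Q3$r$s = (B *v w)$3"
    if "w = vector [qmat 0 0 0 1 0 0 $r$s, qmat 0 1 0 0 1 0 $r$s, qmat 0 0 0 0 0 1 $r$s]" for r s w
  proof -
    have "vector [Q1$r$s, Q2$r$s, Q3$r$s] = B *v w" using entry that by simp
    then have "(vector [Q1$r$s, Q2$r$s, Q3$r$s] :: 'K^3)$i = (B *v w)$i" for i by simp
    from this[of 1] this[of 2] this[of 3] show ?thesis by simp
  qed
  note bdefs = B_def u1_def u2_def u3_def n1_def n2_def n3_def w1_def w2_def w3_def
  have z11: "Q1$1$1 = 0" "Q2$1$1 = 0" "Q3$1$1 = 0"
    using comp[where r=1 and s=1, OF refl] by (simp_all add: qmat_def matrix_vector_mult_def sum_3)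
  have z33: "Q1$3$3 = 0" "Q2$3$3 = 0" "Q3$3$3 = 0"
    using comp[where r=3 and s=3, OF refl] by (simp_all add: qmat_def matrix_vector_mult_def sum_3)
  have s21: "Q1$2$1 = Q1$1$2" "Q2$2$1 = Q2$1$2" "Q3$2$1 = Q3$1$2"
    using comp[where r=2 and s=1, OF refl] by (simp_all add: qmat_def matrix_vector_mult_def sum_3 bdefs two)
  have s13: "Q1$1$3 = Q1$2$2/2" "Q2$1$3 = Q2$2$2/2" "Q3$1$3 = Q3$2$2/2"
    using comp[where r=1 and s=3, OF refl] by (simp_all add: qmat_def matrix_vector_mult_def sum_3 bdefs)
  have s31: "Q1$3$1 = Q1$2$2/2" "Q2$3$1 = Q2$2$2/2" "Q3$3$1 = Q3$2$2/2"
    using comp[where r=3 and s=1, OF refl] by (simp_all add: qmat_def matrix_vector_mult_def sum_3 bdefs)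
  have s32: "Q1$3$2 = Q1$2$3" "Q2$3$2 = Q2$2$3" "Q3$3$2 = Q3$2$3"
    using comp[where r=3 and s=2, OF refl] by (simp_all add: qmat_def matrix_vector_mult_def sum_3 bdefs two)
  have E: "(B ** A)$j$k = mat 1 $j$k" for j k using BA by simp
  have EE: "2*u1*F2 + n1*H2 + 2*w1*G2 = 1" "2*u1*F1 + n1*H1 + 2*w1*G1 = 0" "2*u1*F0 + n1*H0 + 2*w1*G0 = 0"
    "2*u2*F2 + n2*H2 + 2*w2*G2 = 0" "2*u2*F1 + n2*H1 + 2*w2*G1 = 1" "2*u2*F0 + n2*H0 + 2*w2*G0 = 0"
    "2*u3*F2 + n3*H2 + 2*w3*G2 = 0" "2*u3*F1 + n3*H1 + 2*w3*G1 = 0" "2*u3*F0 + n3*H0 + 2*w3*G0 = 1"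
    using E[of 1 1] E[of 1 2] E[of 1 3] E[of 2 1] E[of 2 2] E[of 2 3] E[of 3 1] E[of 3 2] E[of 3 3]
    by (simp_all add: matrix_matrix_mult_def sum_3 A_def B_def mat_def)
  define m1 where "m1 = [:u1, 2*u2, u3:]"
  define m2 where "m2 = [:n1, 2*n2, n3:]"
  define m3 where "m3 = [:w1, 2*w2, w3:]"
  have M11: "[:Q1$1$1, 2*Q2$1$1, Q3$1$1:] = 0" by (simp add: z11)
  have M33: "[:Q1$3$3, 2*Q2$3$3, Q3$3$3:] = 0" by (simp add: z33)
  have M12: "[:Q1$1$2, 2*Q2$1$2, Q3$1$2:] = m1" by (simp add: m1_def u1_def u2_def u3_def)
  have M21: "[:Q1$2$1, 2*Q2$2$1, Q3$2$1:] = m1" by (simp add: m1_def u1_def u2_def u3_def s21)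
  have M22: "[:Q1$2$2, 2*Q2$2$2, Q3$2$2:] = m2" by (simp add: m2_def n1_def n2_def n3_def)
  have M23: "[:Q1$2$3, 2*Q2$2$3, Q3$2$3:] = m3" by (simp add: m3_def w1_def w2_def w3_def)
  have M32: "[:Q1$3$2, 2*Q2$3$2, Q3$3$2:] = m3" by (simp add: m3_def w1_def w2_def w3_def s32)
  have M13: "[:Q1$1$3, 2*Q2$1$3, Q3$1$3:] = [:1/2:] * m2"
    by (simp add: m2_def n1_def n2_def n3_def s13 two)
  have M31: "[:Q1$3$1, 2*Q2$3$1, Q3$3$1:] = [:1/2:] * m2"
    by (simp add: m2_def n1_def n2_def n3_def s31 two)
  have h2: "[:1/2:] + [:1/2:] = (1::'K poly)" using two by (simp add: one_pCons)
  have h4: "[:1/2:] * [:1/2:] = ([:1/4:]::'K poly)" by simp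
  have Pform: "chart_z1 Q1 Q2 Q3 = m2 * (m1*m3 - [:1/4:] * (m2*m2))"
  proof -
    have "chart_z1 Q1 Q2 Q3 = 0 * m2 * 0 + m1 * m3 * ([:1/2:] * m2) + [:1/2:] * m2 * m1 * m3
       - 0 * m3 * m3 - m1 * m1 * 0 - [:1/2:] * m2 * m2 * ([:1/2:] * m2)"
      unfolding chart_z1_def det_3 vec_lambda_beta M11 M33 M12 M21 M22 M23 M32 M13 M31 by (rule refl)
    also have "\<dots> = m2 * (m1*m3 - [:1/4:] * (m2*m2))"
      using h2 h4 by algebra
    finally show ?thesis .
  qed
  show ?thesis
    unfolding affine_dc_smooth_def
  proof (rule notI, elim exE conjE)
    fix t y :: 'K
    assume y1: "y^2 + poly (chart_z1 Q1 Q2 Q3) t = 0" and y2: "2 * y = 0"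
      and y3: "poly (pderiv (chart_z1 Q1 Q2 Q3)) t = 0"
    have "y = 0" using y2 two by simp
    then have P0: "poly (chart_z1 Q1 Q2 Q3) t = 0" using y1 by simp
    define a where "a = poly m1 t"
    define b where "b = poly m2 t"
    define c where "c = poly m3 t"
    define a' where "a' = poly (pderiv m1) t"
    define b' where "b' = poly (pderiv m2) t"
    define c' where "c' = poly (pderiv m3) t"
    have Pt: "poly (chart_z1 Q1 Q2 Q3) t = b * (a*c - 1/4 * (b*b))"
      unfolding Pform a_def b_def c_def by simp
    have P't: "poly (pderiv (chart_z1 Q1 Q2 Q3)) t = b' * (a*c - 1/4 * (b*b)) + b * (a'*c + a*c' - 1/4 * (b'*b + b*b'))"
      unfolding Pform a_def b_def c_def a'_def b'_def c'_def by (simp add: pderiv_mult pderiv_diff pderiv_smult algebra_simps)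
    have av: "a = u1 + 2*t*u2 + t^2*u3" "b = n1 + 2*t*n2 + t^2*n3" "c = w1 + 2*t*w2 + t^2*w3"
      by (simp_all add: a_def b_def c_def m1_def m2_def m3_def algebra_simps power2_eq_square)
    have av': "a' = 2*u2 + 2*t*u3" "b' = 2*n2 + 2*t*n3" "c' = 2*w2 + 2*t*w3"
      by (simp_all add: a'_def b'_def c'_def m1_def m2_def m3_def pderiv_pCons algebra_simps)
    have comb: "\<And>x1 x2 x3 y1 y2 y3 z1 z2 z3 p q r :: 'K.
      (2*(x1 + 2*t*y1 + t^2*z1))*p + (x2 + 2*t*y2 + t^2*z2)*q + (2*(x3 + 2*t*y3 + t^2*z3))*r
      = (2*x1*p + x2*q + 2*x3*r) + 2*t*(2*y1*p + y2*q + 2*y3*r) + t^2*(2*z1*p + z2*q + 2*z3*r)"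
      by (simp add: algebra_simps)
    have comb': "\<And>y1 y2 y3 z1 z2 z3 p q r :: 'K.
      (2*(2*y1 + 2*t*z1))*p + (2*y2 + 2*t*z2)*q + (2*(2*y3 + 2*t*z3))*r
      = 2*(2*y1*p + y2*q + 2*y3*r) + 2*t*(2*z1*p + z2*q + 2*z3*r)"
      by (simp add: algebra_simps)
    have "(4::'K) = 2*2" by simp
    then have four: "(4::'K) \<noteq> 0" using two by (metis mult_eq_0_iff)
    show False
    proof (rule core_cases[OF two Cs Ds, of "2*a" b "2*c" t "2*a'" b' "2*c'"])
      show "2*a*F2 + b*H2 + 2*c*G2 = 1" unfolding av comb using EE by simp
      show "2*a*F1 + b*H1 + 2*c*G1 = 2*t" unfolding av comb using EE by simp
      show "2*a*F0 + b*H0 + 2*c*G0 = t^2" unfolding av comb using EE by simp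
      show "2*a'*F2 + b'*H2 + 2*c'*G2 = 0" unfolding av' comb' using EE by simp
      show "2*a'*F1 + b'*H1 + 2*c'*G1 = 2" unfolding av' comb' using EE by simp
      show "2*a'*F0 + b'*H0 + 2*c'*G0 = 2*t" unfolding av' comb' using EE by simp
      have eq1: "b*(2*a*(2*c) - b^2) = 4 * poly (chart_z1 Q1 Q2 Q3) t"
        unfolding Pt using four by (simp add: algebra_simps power2_eq_square)
      show "b*(2*a*(2*c) - b^2) = 0" unfolding eq1 P0 by simp
      have eq2: "b'*(2*a*(2*c) - b^2) + b*(2*a'*(2*c) + 2*a*(2*c') - 2*b*b') = 4 * poly (pderiv (chart_z1 Q1 Q2 Q3)) t"
        unfolding P't using four by (simp add: algebra_simps power2_eq_square)
      show "b'*(2*a*(2*c) - b^2) + b*(2*a'*(2*c) + 2*a*(2*c') - 2*b*b') = 0" unfolding eq2 y3 by simp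
    qed
  qed
qed





lemma poly_bezout_aux:
  fixes p q :: "'a::field poly"
  shows "\<exists>g a b. g = a * p + b * q \<and> g dvd p \<and> g dvd q"
proof (induction "degree q" arbitrary: p q rule: less_induct)
  case less
  show ?case
  proof (cases "q = 0")
    case True
    then show ?thesis by (rule_tac x=p in exI, rule_tac x=1 in exI, rule_tac x=0 in exI) simp
  next
    case qnz: False
    show ?thesis
    proof (cases "p mod q = 0")
      case True
      then have "q dvd p" by (simp add: mod_eq_0_iff_dvd)
      then show ?thesis by (rule_tac x=q in exI, rule_tac x=0 in exI, rule_tac x=1 in exI) simp
    next
      case False
      then have "degree (p mod q) < degree q" using degree_mod_less' qnz by blast
      from less[OF this, of q] obtain g a b where g: "g = a * q + b * (p mod q)" "g dvd q" "g dvd (p mod q)"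
        by blast
      have pe: "p = (p div q) * q + p mod q" by simp
      have "g dvd p" using g(2,3) by (metis dvd_add dvd_mult pe)
      moreover have "g = b * p + (a - b * (p div q)) * q"
      proof -
        have "g = a * q + b * (p - (p div q) * q)" using g(1) by (simp add: minus_div_mult_eq_mod)
        then show ?thesis by (simp add: algebra_simps)
      qed
      ultimately show ?thesis using g(2) by blast
    qed
  qed
qed

section \<open>Slices of Laurent-series polynomials\<close>

definition sl :: "int \<Rightarrow> 'a::zero fls poly \<Rightarrow> 'a poly" where
  "sl n p = map_poly (\<lambda>c. fls_nth c n) p"

definition bnd :: "int \<Rightarrow> 'a::zero fls poly \<Rightarrow> bool" where
  "bnd a p \<longleftrightarrow> (\<forall>j m. m < a \<longrightarrow> fls_nth (coeff p j) m = 0)"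

lemma coeff_sl: "coeff (sl n p) j = fls_nth (coeff p j) n"
  by (simp add: sl_def coeff_map_poly)

lemma fls_mult_nth_bnd:
  fixes x y :: "'a::{comm_semiring_1} fls"
  assumes "\<And>m. m < a \<Longrightarrow> fls_nth x m = 0" "\<And>m. m < b \<Longrightarrow> fls_nth y m = 0"
  shows "fls_nth (x*y) (a+b) = fls_nth x a * fls_nth y b"
proof (cases "x = 0 \<or> y = 0")
  case True then show ?thesis by auto
next
  case False
  then have nz: "x \<noteq> 0" "y \<noteq> 0" by auto
  have sx: "a \<le> fls_subdegree x" using fls_subdegree_geI[OF nz(1)] assms(1) by blast
  have sy: "b \<le> fls_subdegree y" using fls_subdegree_geI[OF nz(2)] assms(2) by blast
  show ?thesis
  proof (cases "a = fls_subdegree x \<and> b = fls_subdegree y")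
    case True
    then show ?thesis by (simp add: fls_times_nth(1))
  next
    case False
    then have "a + b < fls_subdegree x + fls_subdegree y" using sx sy by auto
    then have "fls_nth (x*y) (a+b) = 0" by (rule fls_times_nth_eq0)
    moreover have "fls_nth x a * fls_nth y b = 0" using False sx sy by auto
    ultimately show ?thesis by simp
  qed
qed

lemma fls_mult_nth_bnd0:
  fixes x y :: "'a::{comm_semiring_1} fls"
  assumes "\<And>m. m < a \<Longrightarrow> fls_nth x m = 0" "\<And>m. m < b \<Longrightarrow> fls_nth y m = 0" "n < a + b"
  shows "fls_nth (x*y) n = 0"
proof (cases "x = 0 \<or> y = 0")
  case True then show ?thesis by auto
next
  case False
  then have nz: "x \<noteq> 0" "y \<noteq> 0" by auto
  have sx: "a \<le> fls_subdegree x" using fls_subdegree_geI[OF nz(1)] assms(1) by blast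
  have sy: "b \<le> fls_subdegree y" using fls_subdegree_geI[OF nz(2)] assms(2) by blast
  show ?thesis by (rule fls_times_nth_eq0) (use sx sy assms(3) in auto)
qed

lemma sl_mult:
  fixes p q :: "'a::comm_semiring_1 fls poly"
  assumes "bnd a p" "bnd b q"
  shows "sl (a+b) (p*q) = sl a p * sl b q"
proof (rule poly_eqI)
  fix k
  have "coeff (sl (a+b) (p*q)) k = (\<Sum>i\<le>k. fls_nth (coeff p i * coeff q (k-i)) (a+b))"
    by (simp add: coeff_sl coeff_mult fls_nth_sum)
  also have "\<dots> = (\<Sum>i\<le>k. fls_nth (coeff p i) a * fls_nth (coeff q (k-i)) b)"
    by (rule sum.cong[OF refl], rule fls_mult_nth_bnd) (use assms in \<open>auto simp: bnd_def\<close>)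
  also have "\<dots> = coeff (sl a p * sl b q) k" by (simp add: coeff_mult coeff_sl)
  finally show "coeff (sl (a+b) (p*q)) k = coeff (sl a p * sl b q) k" .
qed

lemma bnd_mult:
  fixes p q :: "'a::comm_semiring_1 fls poly"
  assumes "bnd a p" "bnd b q"
  shows "bnd (a+b) (p*q)"
  unfolding bnd_def
proof (intro allI impI)
  fix j m assume m: "m < a + b"
  have "fls_nth (coeff (p*q) j) m = (\<Sum>i\<le>j. fls_nth (coeff p i * coeff q (j-i)) m)"
    by (simp add: coeff_mult fls_nth_sum)
  also have "\<dots> = 0"
    by (rule sum.neutral, intro ballI, rule fls_mult_nth_bnd0[of a _ b]) (use assms m in \<open>auto simp: bnd_def\<close>)
  finally show "fls_nth (coeff (p*q) j) m = 0" .
qed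

lemma sl_pderiv: "sl n (pderiv (p :: 'a::idom fls poly)) = pderiv (sl n p)"
  by (rule poly_eqI) (simp add: coeff_sl coeff_pderiv del: of_nat_Suc)

lemma bnd_pderiv: "bnd a (p :: 'a::idom fls poly) \<Longrightarrow> bnd a (pderiv p)"
  by (simp add: bnd_def coeff_pderiv del: of_nat_Suc)

lemma sl_eq_0_bnd: "bnd a p \<Longrightarrow> n < a \<Longrightarrow> sl n p = 0"
  by (rule poly_eqI) (simp add: coeff_sl bnd_def)

lemma finite_neg_support:
  fixes p :: "'a::zero fls poly"
  shows "finite {m. m < c \<and> (\<exists>j. fls_nth (coeff p j) m \<noteq> 0)}"
proof -
  have "{m. m < c \<and> (\<exists>j. fls_nth (coeff p j) m \<noteq> 0)} \<subseteq> (\<Union>j\<in>{..degree p}. {fls_subdegree (coeff p j)..<c})"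
  proof
    fix m assume "m \<in> {m. m < c \<and> (\<exists>j. fls_nth (coeff p j) m \<noteq> 0)}"
    then obtain j where j: "m < c" "fls_nth (coeff p j) m \<noteq> 0" by auto
    then have "coeff p j \<noteq> 0" by auto
    then have "j \<le> degree p" by (meson le_degree)
    moreover have "fls_subdegree (coeff p j) \<le> m" using j(2) by (rule fls_subdegree_leI)
    ultimately show "m \<in> (\<Union>j\<in>{..degree p}. {fls_subdegree (coeff p j)..<c})" using j(1) by auto
  qed
  then show ?thesis by (rule finite_subset) auto
qed

lemma bnd_min:
  fixes p :: "'a::zero fls poly"
  assumes "m0 < c" "fls_nth (coeff p j0) m0 \<noteq> 0"
  shows "\<exists>mm. mm < c \<and> bnd mm p \<and> sl mm p \<noteq> 0"
proof -
  define S where "S = {m. m < c \<and> (\<exists>j. fls_nth (coeff p j) m \<noteq> 0)}"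
  have fin: "finite S" unfolding S_def by (rule finite_neg_support)
  have ne: "m0 \<in> S" using assms by (auto simp: S_def)
  define mm where "mm = Min S"
  have mmS: "mm \<in> S" unfolding mm_def by (rule Min_in) (use fin ne in auto)
  have le: "mm \<le> m" if "m \<in> S" for m using fin that by (simp add: mm_def)
  have "bnd mm p" unfolding bnd_def
  proof (intro allI impI)
    fix j m assume "m < mm"
    then have "m < c" using mmS by (auto simp: S_def)
    show "fls_nth (coeff p j) m = 0"
    proof (rule ccontr)
      assume "fls_nth (coeff p j) m \<noteq> 0"
      then have "m \<in> S" using \<open>m < c\<close> by (auto simp: S_def)
      then show False using le \<open>m < mm\<close> by force
    qed
  qed
  moreover from mmS obtain j where "fls_nth (coeff p j) mm \<noteq> 0" "mm < c" by (auto simp: S_def)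
  then have "sl mm p \<noteq> 0" by (metis coeff_sl coeff_0)
  ultimately show ?thesis using \<open>mm < c\<close> by blast
qed

lemma integral_quot:
  fixes G H :: "'a::idom fls poly"
  assumes "bnd 0 G" "sl 0 G \<noteq> 0" "bnd 0 (G*H)"
  shows "bnd 0 H"
proof (rule ccontr)
  assume "\<not> bnd 0 H"
  then obtain j m where "m < 0" "fls_nth (coeff H j) m \<noteq> 0" by (auto simp: bnd_def)
  from bnd_min[OF this] obtain mm where mm: "mm < 0" "bnd mm H" "sl mm H \<noteq> 0" by blast
  have "sl (0 + mm) (G*H) = sl 0 G * sl mm H" by (rule sl_mult[OF assms(1) mm(2)])
  moreover have "sl (0 + mm) (G*H) = 0" using sl_eq_0_bnd[OF assms(3)] mm(1) by simp
  ultimately show False using assms(2) mm(3) by simp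
qed

lemma normalize_prim:
  fixes G :: "'a::field fls poly"
  assumes "G \<noteq> 0"
  shows "\<exists>c. c \<noteq> 0 \<and> bnd 0 (smult c G) \<and> sl 0 (smult c G) \<noteq> 0"
proof -
  obtain j where j: "coeff G j \<noteq> 0" using assms by (metis leading_coeff_0_iff)
  define m0 where "m0 = fls_subdegree (coeff G j)"
  have "fls_nth (coeff G j) m0 \<noteq> 0" using j by (simp add: m0_def)
  from bnd_min[OF _ this, of "m0 + 1"] obtain mm where mm: "bnd mm G" "sl mm G \<noteq> 0" by auto
  define c :: "'a fls" where "c = fls_X_intpow (- mm)"
  have cnz: "c \<noteq> 0" unfolding c_def by (rule fls_X_intpow_nonzero)
  have sh: "fls_nth (coeff (smult c G) i) n = fls_nth (coeff G i) (n + mm)" for i n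
    unfolding c_def coeff_smult fls_X_intpow_times_conv_shift(1) by simp
  have "bnd 0 (smult c G)" using mm(1) unfolding bnd_def sh by simp
  moreover have "sl 0 (smult c G) = sl mm G"
    by (rule poly_eqI) (simp only: coeff_sl sh, simp)
  ultimately show ?thesis using cnz mm(2) by metis
qed

lemma sl_degree_le: "degree (sl n p) \<le> degree p"
  by (rule degree_le) (simp add: coeff_sl coeff_eq_0)

lemma spec_lemma:
  fixes Pf g :: "'a::field fls poly" and P0 :: "'a poly"
  assumes bP: "bnd 0 Pf" and sP: "sl 0 Pf = P0" and degP: "degree Pf \<le> 6"
    and dg: "degree g > 0" and gP: "g dvd Pf" and gP': "g dvd pderiv Pf"
  shows "(\<exists>G. degree G > 0 \<and> G dvd P0 \<and> G dvd pderiv P0) \<or> (coeff P0 6 = 0 \<and> coeff P0 5 = 0)"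
proof -
  have gnz: "g \<noteq> 0" using dg by auto
  from normalize_prim[OF gnz] obtain c where c: "c \<noteq> 0" "bnd 0 (smult c g)" "sl 0 (smult c g) \<noteq> 0"
    by blast
  define g' where "g' = smult c g"
  have g'g: "g' dvd g"
  proof -
    have "g = g' * [:inverse c:]" using c(1) by (simp add: g'_def)
    then show ?thesis by (metis dvd_triv_left)
  qed
  have dg': "degree g' = degree g" using c(1) by (simp add: g'_def)
  have g'P: "g' dvd Pf" using g'g gP by (rule dvd_trans)
  have g'P': "g' dvd pderiv Pf" using g'g gP' by (rule dvd_trans)
  have bg: "bnd 0 g'" "sl 0 g' \<noteq> 0" using c by (simp_all add: g'_def)
  from g'P obtain H where H: "Pf = g' * H" by (elim dvdE)
  from g'P' obtain H2 where H2: "pderiv Pf = g' * H2" by (elim dvdE)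
  have bH: "bnd 0 H" using integral_quot[OF bg] bP H by simp
  have bH2: "bnd 0 H2" using integral_quot[OF bg] bnd_pderiv[OF bP] H2 by simp
  have P0f: "P0 = sl 0 g' * sl 0 H" using sl_mult[OF bg(1) bH] sP H by simp
  have P0f': "pderiv P0 = sl 0 g' * sl 0 H2"
    using sl_mult[OF bg(1) bH2] sP H2 sl_pderiv[of 0 Pf] by simp
  show ?thesis
  proof (cases "degree (sl 0 g') > 0")
    case True
    then show ?thesis using P0f P0f' by auto
  next
    case False
    then have d0: "degree (sl 0 g') = 0" by simp
    show ?thesis
    proof (cases "Pf = 0")
      case True
      then have "P0 = 0" using sP by (simp add: sl_def)
      then show ?thesis by simp
    next
      case Pnz: False
      have "\<exists>W V. Pf = W * V \<and> degree W \<ge> 2 \<and> bnd 0 W \<and> sl 0 W \<noteq> 0 \<and> degree (sl 0 W) = 0"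
      proof (cases "degree g' \<ge> 2")
        case True
        then show ?thesis using H bg d0 by blast
      next
        case False
        then have d1: "degree g' = 1" using dg dg' by simp
        have pd: "pderiv g' = [:coeff g' 1:]"
        proof (rule poly_eqI)
          fix n
          show "coeff (pderiv g') n = coeff [:coeff g' 1:] n"
          proof (cases n)
            case 0 then show ?thesis by (simp add: coeff_pderiv)
          next
            case (Suc m)
            then have "coeff g' (Suc n) = 0" using d1 by (simp add: coeff_eq_0)
            then show ?thesis using Suc by (simp add: coeff_pderiv del: of_nat_Suc)
          qed
        qed
        have "g' \<noteq> 0" using d1 by auto
        then have "coeff g' (degree g') \<noteq> 0" by simp
        then have lc: "coeff g' 1 \<noteq> 0" using d1 by simp
        have "pderiv Pf = pderiv g' * H + g' * pderiv H" unfolding H by (simp add: pderiv_mult)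
        then have "g' dvd pderiv g' * H" using g'P' by (metis dvd_add_times_triv_right_iff mult.commute)
        then have "g' dvd smult (coeff g' 1) H" using pd by simp
        then have "g' dvd H" using lc by (rule dvd_smult_cancel)
        then obtain H3 where H3: "H = g' * H3" by (elim dvdE)
        have "Pf = (g' * g') * H3" using H H3 by (simp add: mult.assoc)
        moreover have "degree (g' * g') \<ge> 2"
        proof -
          have "g' \<noteq> 0" using d1 by auto
          then have "degree (g' * g') = 2" using d1 by (simp add: degree_mult_eq)
          then show ?thesis by simp
        qed
        moreover have "bnd 0 (g' * g')" using bnd_mult[OF bg(1) bg(1)] by simp
        moreover have "sl 0 (g' * g') = sl 0 g' * sl 0 g'" using sl_mult[OF bg(1) bg(1)] by simp
        then have "sl 0 (g' * g') \<noteq> 0" "degree (sl 0 (g' * g')) = 0" using bg(2) d0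
          by (simp_all add: degree_mult_eq)
        ultimately show ?thesis by blast
      qed
      then obtain W V where WV: "Pf = W * V" "degree W \<ge> 2" "bnd 0 W" "sl 0 W \<noteq> 0" "degree (sl 0 W) = 0"
        by blast
      have bV: "bnd 0 V" using integral_quot[OF WV(3,4)] bP WV(1) by simp
      have P0W: "P0 = sl 0 W * sl 0 V" using sl_mult[OF WV(3) bV] sP WV(1) by simp
      have "W \<noteq> 0" "V \<noteq> 0" using Pnz WV(1) by auto
      then have "degree Pf = degree W + degree V" using WV(1) by (simp add: degree_mult_eq)
      then have "degree V \<le> 4" using degP WV(2) by simp
      then have "degree (sl 0 V) \<le> 4" using sl_degree_le[of 0 V] by simp
      then have "degree P0 \<le> 4" unfolding P0W using degree_mult_le[of "sl 0 W" "sl 0 V"] WV(5) by simp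
      then show ?thesis by (simp add: coeff_eq_0)
    qed
  qed
qed

definition Sfps :: "'a::field^3^3 \<Rightarrow> 'a^3^3 \<Rightarrow> 'a fps^3^3" where
  "Sfps q D = (\<chi> i j. fps_const (vec_nth (vec_nth q i) j) + fps_X * (fps_const (vec_nth (vec_nth D i) j) - fps_const (vec_nth (vec_nth q i) j)))"

definition Pfps :: "'a::field^3^3 \<Rightarrow> 'a^3^3 \<Rightarrow> 'a^3^3 \<Rightarrow> 'a^3^3 \<Rightarrow> 'a^3^3 \<Rightarrow> 'a^3^3 \<Rightarrow> 'a fps poly" where
  "Pfps q1 q2 q3 D1 D2 D3 = det (\<chi> i j. [: vec_nth (vec_nth (Sfps q1 D1) i) j, 2 * vec_nth (vec_nth (Sfps q2 D2) i) j,
      vec_nth (vec_nth (Sfps q3 D3) i) j :])"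

lemma Qeps_entry: "vec_nth (vec_nth (Qeps q D) i) j = fls_const (vec_nth (vec_nth q i) j) +
    fls_X * (fls_const (vec_nth (vec_nth D i) j) - fls_const (vec_nth (vec_nth q i) j))"
  by (simp add: Qeps_def map_mat_def smat_def)

lemma fls_const_diff': "fls_const (a - b) = fls_const a - fls_const (b::'a::ab_group_add)"
  by (rule fls_eqI) simp

lemma Pf_Pfps: "chart_z1 (Qeps q1 D1) (Qeps q2 D2) (Qeps q3 D3) = map_poly fps_to_fls (Pfps q1 q2 q3 D1 D2 D3)"
proof -
  have "map_poly fps_to_fls (Pfps q1 q2 q3 D1 D2 D3) =
     det (\<chi> i j. map_poly fps_to_fls [: vec_nth (vec_nth (Sfps q1 D1) i) j, 2 * vec_nth (vec_nth (Sfps q2 D2) i) j,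
      vec_nth (vec_nth (Sfps q3 D3) i) j :])"
    unfolding Pfps_def
    by (subst det3_poly_hom) (simp_all add: fls_times_fps_to_fls)
  also have "\<dots> = chart_z1 (Qeps q1 D1) (Qeps q2 D2) (Qeps q3 D3)"
    unfolding chart_z1_def
    by (simp add: map_poly_pCons fls_times_fps_to_fls Sfps_def Qeps_entry fls_const_diff')
  finally show ?thesis by simp
qed

lemma P0_Pfps: "chart_z1 q1 q2 q3 = map_poly (\<lambda>f. fps_nth f 0) (Pfps q1 q2 q3 D1 D2 D3)"
proof -
  have "map_poly (\<lambda>f. fps_nth f 0) (Pfps q1 q2 q3 D1 D2 D3) =
     det (\<chi> i j. map_poly (\<lambda>f. fps_nth f 0) [: vec_nth (vec_nth (Sfps q1 D1) i) j, 2 * vec_nth (vec_nth (Sfps q2 D2) i) j,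
      vec_nth (vec_nth (Sfps q3 D3) i) j :])"
    unfolding Pfps_def
    by (subst det3_poly_hom) simp_all
  also have "\<dots> = chart_z1 q1 q2 q3"
    unfolding chart_z1_def
    by (simp add: map_poly_pCons Sfps_def)
  finally show ?thesis by simp
qed

lemma generic:
  fixes q1 q2 q3 D1 D2 D3 :: "'a::field^3^3" and \<psi> :: "'a fls \<Rightarrow> 'L::field"
  assumes two: "(2::'a) \<noteq> 0" and h: "field_hom \<psi>"
    and nodiv: "\<forall>G. degree G > 0 \<longrightarrow> \<not> (G dvd chart_z1 q1 q2 q3 \<and> G dvd pderiv (chart_z1 q1 q2 q3))"
    and coef: "\<not> (coeff (chart_z1 q1 q2 q3) 6 = 0 \<and> coeff (chart_z1 q1 q2 q3) 5 = 0)"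
  shows "affine_dc_smooth (chart_z1 (map_mat \<psi> (Qeps q1 D1)) (map_mat \<psi> (Qeps q2 D2)) (map_mat \<psi> (Qeps q3 D3)))"
proof -
  define P0 where "P0 = chart_z1 q1 q2 q3"
  define Pf where "Pf = chart_z1 (Qeps q1 D1) (Qeps q2 D2) (Qeps q3 D3)"
  define Pp where "Pp = Pfps q1 q2 q3 D1 D2 D3"
  have Pf_eq: "Pf = map_poly fps_to_fls Pp" unfolding Pf_def Pp_def by (rule Pf_Pfps)
  have P0_eq: "P0 = map_poly (\<lambda>f. fps_nth f 0) Pp" unfolding P0_def Pp_def by (rule P0_Pfps)
  have bP: "bnd 0 Pf" unfolding bnd_def Pf_eq by (simp add: coeff_map_poly)
  have sP: "sl 0 Pf = P0" unfolding P0_eq Pf_eq by (rule poly_eqI) (simp add: coeff_sl coeff_map_poly)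
  have degP: "degree Pf \<le> 6" unfolding Pf_def by (rule chart_z1_degree)
  have L_eq: "chart_z1 (map_mat \<psi> (Qeps q1 D1)) (map_mat \<psi> (Qeps q2 D2)) (map_mat \<psi> (Qeps q3 D3)) = map_poly \<psi> Pf"
    unfolding Pf_def by (rule chart_z1_hom[OF h])
  have hom0: "\<psi> 0 = 0" using h by (rule fh_0)
  have homadd: "\<And>x y. \<psi> (x + y) = \<psi> x + \<psi> y" using h by (rule fh_add)
  have hommult: "\<And>x y. \<psi> (x * y) = \<psi> x * \<psi> y" using h by (rule fh_mult)
  have homnat: "\<And>n. \<psi> (of_nat n) = of_nat n" using h by (rule fh_of_nat)
  have two_fls: "(2::'a fls) \<noteq> 0"
  proof
    assume "(2::'a fls) = 0"
    then have "fls_nth (of_nat 2 :: 'a fls) 0 = 0" by simp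
    then show False using two by (simp add: fls_of_nat_nth)
  qed
  have twoL: "(2::'L) \<noteq> 0" using fh_nz[OF h two_fls] fh_2[OF h] by simp
  have mapd: "pderiv (map_poly \<psi> Pf) = map_poly \<psi> (pderiv Pf)"
    by (rule map_poly_pderiv_hom[symmetric]) (simp_all add: hom0 homadd hommult homnat)
  show ?thesis
    unfolding affine_dc_smooth_def L_eq
  proof (rule notI, elim exE conjE)
    fix t y :: 'L
    assume y1: "y^2 + poly (map_poly \<psi> Pf) t = 0" and y2: "2 * y = 0"
      and y3: "poly (pderiv (map_poly \<psi> Pf)) t = 0"
    have "y = 0" using y2 twoL by simp
    then have r1: "poly (map_poly \<psi> Pf) t = 0" using y1 by simp
    have r2: "poly (map_poly \<psi> (pderiv Pf)) t = 0" using y3 mapd by simp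
    obtain g a b where g: "g = a * Pf + b * pderiv Pf" "g dvd Pf" "g dvd pderiv Pf"
      using poly_bezout_aux by blast
    show False
    proof (cases "degree g = 0")
      case True
      then obtain c where c: "g = [:c:]" by (metis degree_eq_zeroE)
      show False
      proof (cases "c = 0")
        case True
        then have "Pf = 0" using g(2) c by simp
        then have "P0 = 0" using sP by (simp add: sl_def)
        then show False using coef by (simp add: P0_def)
      next
        case False
        have "map_poly \<psi> g = map_poly \<psi> a * map_poly \<psi> Pf + map_poly \<psi> b * map_poly \<psi> (pderiv Pf)"
          unfolding g(1) by (simp add: map_poly_add_hom map_poly_mult_hom hom0 homadd hommult)
        then have "poly (map_poly \<psi> g) t = 0" using r1 r2 by simp
        moreover have "poly (map_poly \<psi> g) t = \<psi> c" using c hom0 by (simp add: map_poly_pCons)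
        ultimately show False using fh_nz[OF h False] by simp
      qed
    next
      case False
      then have "degree g > 0" by simp
      from spec_lemma[OF bP sP degP this g(2,3)] show False using nodiv coef
        by (auto simp: P0_def)
    qed
  qed
qed

lemma not_smoothI: "poly p r = 0 \<Longrightarrow> poly (pderiv p) r = 0 \<Longrightarrow> \<not> affine_dc_smooth p"
  unfolding affine_dc_smooth_def by (intro notI, erule notE, intro exI[of _ r] exI[of _ 0]) simp

lemma smooth_connected:
  fixes Q1 Q2 Q3 :: "'K::field^3^3"
  assumes closed: "alg_closed_type TYPE('K)" and sm: "X_smooth Q1 Q2 Q3"
  shows "X_connected Q1 Q2 Q3"
  unfolding X_connected_def
proof
  assume "\<exists>G. - chart_z1 Q1 Q2 Q3 = G^2"
  then obtain G where G: "- chart_z1 Q1 Q2 Q3 = G^2" by blast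
  define P where "P = chart_z1 Q1 Q2 Q3"
  have PG: "P = - (G * G)" using G by (simp add: P_def power2_eq_square minus_equation_iff)
  show False
  proof (cases "degree G > 0")
    case True
    then obtain r where r: "poly G r = 0" using closed by (auto simp: alg_closed_type_def)
    have "poly P r = 0" using r PG by simp
    moreover have "poly (pderiv P) r = 0" using r PG by (simp add: pderiv_mult pderiv_minus)
    ultimately have "\<not> affine_dc_smooth P" by (rule not_smoothI)
    then show False using sm by (simp add: X_smooth_def P_def)
  next
    case False
    then obtain c where c: "G = [:c:]" by (metis degree_eq_zeroE neq0_conv)
    have P0: "coeff P 6 = 0" "coeff P 5 = 0" using PG c by (simp_all add: numeral_eq_Suc)
    have "coeff (chart_x1 Q1 Q2 Q3) 0 = 0" "coeff (chart_x1 Q1 Q2 Q3) 1 = 0"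
      using P0 chart_z1_coeff_swap[where A=Q3 and B=Q2 and C=Q1] by (simp_all add: chart_x1_swap P_def)
    then have "\<not> affine_dc_smooth (chart_x1 Q1 Q2 Q3)"
      by (intro not_smoothI[of _ 0]) (simp_all add: poly_0_coeff_0 coeff_pderiv)
    then show False using sm by (simp add: X_smooth_def)
  qed
qed

lemma nodiv_from:
  fixes p :: "'a::field poly" and h :: "'a \<Rightarrow> 'K::field"
  assumes h: "field_hom h" and closed: "alg_closed_type TYPE('K)"
    and sm: "affine_dc_smooth (map_poly h p)"
  shows "\<forall>G. degree G > 0 \<longrightarrow> \<not> (G dvd p \<and> G dvd pderiv p)"
proof (intro allI impI notI, elim conjE)
  fix G assume dG: "degree G > 0" and d1: "G dvd p" and d2: "G dvd pderiv p"
  have hom0: "h 0 = 0" using h by (rule fh_0)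
  have homadd: "\<And>x y. h (x + y) = h x + h y" using h by (rule fh_add)
  have hommult: "\<And>x y. h (x * y) = h x * h y" using h by (rule fh_mult)
  have homnat: "\<And>n. h (of_nat n) = of_nat n" using h by (rule fh_of_nat)
  have "degree (map_poly h G) = degree G" by (rule degree_map_poly) (use fh_nz[OF h] in auto)
  then have "\<exists>r. poly (map_poly h G) r = 0" using dG closed unfolding alg_closed_type_def by simp
  then obtain r where r: "poly (map_poly h G) r = 0" by blast
  from d1 obtain H where H: "p = G * H" by (elim dvdE)
  from d2 obtain H2 where H2: "pderiv p = G * H2" by (elim dvdE)
  have "poly (map_poly h p) r = 0" unfolding H using r by (simp add: map_poly_mult_hom hom0 homadd hommult)
  moreover have "poly (pderiv (map_poly h p)) r = 0"
  proof -
    have "pderiv (map_poly h p) = map_poly h (pderiv p)"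
      by (rule map_poly_pderiv_hom[symmetric]) (simp_all add: hom0 homadd hommult homnat)
    then show ?thesis unfolding H2 using r by (simp add: map_poly_mult_hom hom0 homadd hommult)
  qed
  ultimately show False using sm not_smoothI by blast
qed

lemma coef_from:
  fixes p :: "'a::field poly" and h :: "'a \<Rightarrow> 'K::field"
  assumes h: "field_hom h" and sm: "affine_dc_smooth (map_poly h p)"
  shows "\<not> (coeff p 0 = 0 \<and> coeff p 1 = 0)"
proof
  assume c: "coeff p 0 = 0 \<and> coeff p 1 = 0"
  have hom0: "h 0 = 0" using h by (rule fh_0)
  have "poly (map_poly h p) 0 = 0" using c hom0 by (simp add: poly_0_coeff_0 coeff_map_poly)
  moreover have "poly (pderiv (map_poly h p)) 0 = 0" using c hom0 by (simp add: poly_0_coeff_0 coeff_pderiv coeff_map_poly)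
  ultimately show False using sm not_smoothI by blast
qed

lemma C_swap:
  assumes C: "quartic_C_smooth f2 f1 f0 h2 h1 h0 g2 g1 (g0::'K::field)"
  shows "quartic_C_smooth f0 f1 f2 h0 h1 h2 g0 g1 g2"
  unfolding quartic_C_smooth_def Let_def
proof
  assume "\<exists>x y z. (x, y, z) \<noteq> (0, 0, 0) \<and>
     y ^ 4 - bq h0 h1 h2 x z * y\<^sup>2 + bq f0 f1 f2 x z * bq g0 g1 g2 x z = 0 \<and>
     - (2 * h0 * x + h1 * z) * y\<^sup>2 + (2 * f0 * x + f1 * z) * bq g0 g1 g2 x z + bq f0 f1 f2 x z * (2 * g0 * x + g1 * z) = 0 \<and>
     4 * y ^ 3 - 2 * bq h0 h1 h2 x z * y = 0 \<and>
     - (h1 * x + 2 * h2 * z) * y\<^sup>2 + (f1 * x + 2 * f2 * z) * bq g0 g1 g2 x z + bq f0 f1 f2 x z * (g1 * x + 2 * g2 * z) = 0"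
  then obtain x y z where xyz: "(x, y, z) \<noteq> (0, 0, 0)"
     "y ^ 4 - bq h0 h1 h2 x z * y\<^sup>2 + bq f0 f1 f2 x z * bq g0 g1 g2 x z = 0"
     "- (2 * h0 * x + h1 * z) * y\<^sup>2 + (2 * f0 * x + f1 * z) * bq g0 g1 g2 x z + bq f0 f1 f2 x z * (2 * g0 * x + g1 * z) = 0"
     "4 * y ^ 3 - 2 * bq h0 h1 h2 x z * y = 0"
     "- (h1 * x + 2 * h2 * z) * y\<^sup>2 + (f1 * x + 2 * f2 * z) * bq g0 g1 g2 x z + bq f0 f1 f2 x z * (g1 * x + 2 * g2 * z) = 0"
    by blast
  have sw: "bq a0 a1 a2 x z = bq a2 a1 a0 z x" for a0 a1 a2 :: 'K by (simp add: bq_def algebra_simps)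
  have "\<not> quartic_C_smooth f2 f1 f0 h2 h1 h0 g2 g1 g0"
    unfolding quartic_C_smooth_def Let_def
    apply (rule notI, erule notE, rule exI[of _ z], rule exI[of _ y], rule exI[of _ x])
    using xyz unfolding sw by (auto simp: algebra_simps)
  then show False using C by simp
qed

lemma D_swap:
  assumes D: "curve_D_smooth f2 f1 f0 h2 h1 h0 g2 g1 (g0::'K::field)"
  shows "curve_D_smooth f0 f1 f2 h0 h1 h2 g0 g1 g2"
  unfolding curve_D_smooth_def Let_def
proof
  assume "\<exists>x y z. (x, z) \<noteq> (0, 0) \<and>
     y\<^sup>2 - bq h0 h1 h2 x z * y + bq f0 f1 f2 x z * bq g0 g1 g2 x z = 0 \<and>
     - (2 * h0 * x + h1 * z) * y + (2 * f0 * x + f1 * z) * bq g0 g1 g2 x z + bq f0 f1 f2 x z * (2 * g0 * x + g1 * z) = 0 \<and>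
     2 * y - bq h0 h1 h2 x z = 0 \<and>
     - (h1 * x + 2 * h2 * z) * y + (f1 * x + 2 * f2 * z) * bq g0 g1 g2 x z + bq f0 f1 f2 x z * (g1 * x + 2 * g2 * z) = 0"
  then obtain x y z where xyz: "(x, z) \<noteq> (0, 0)"
     "y\<^sup>2 - bq h0 h1 h2 x z * y + bq f0 f1 f2 x z * bq g0 g1 g2 x z = 0"
     "- (2 * h0 * x + h1 * z) * y + (2 * f0 * x + f1 * z) * bq g0 g1 g2 x z + bq f0 f1 f2 x z * (2 * g0 * x + g1 * z) = 0"
     "2 * y - bq h0 h1 h2 x z = 0"
     "- (h1 * x + 2 * h2 * z) * y + (f1 * x + 2 * f2 * z) * bq g0 g1 g2 x z + bq f0 f1 f2 x z * (g1 * x + 2 * g2 * z) = 0"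
    by blast
  have sw: "bq a0 a1 a2 x z = bq a2 a1 a0 z x" for a0 a1 a2 :: 'K by (simp add: bq_def algebra_simps)
  have "\<not> curve_D_smooth f2 f1 f0 h2 h1 h0 g2 g1 g0"
    unfolding curve_D_smooth_def Let_def
    apply (rule notI, erule notE, rule exI[of _ z], rule exI[of _ y], rule exI[of _ x])
    using xyz unfolding sw by (auto simp: algebra_simps)
  then show False using D by simp
qed

lemma map_mat_smat3:
  "field_hom h \<Longrightarrow> map_mat h (smat a M + smat b N + smat c P) =
     smat (h a) (map_mat h M) + smat (h b) (map_mat h N) + smat (h c) (map_mat h P)"
  by (simp add: map_mat_def smat_def vec_eq_iff fh_add fh_mult)

lemma map_mat_qmat:
  "field_hom h \<Longrightarrow> map_mat h (qmat a b c d e f) = qmat (h a) (h b) (h c) (h d) (h e) (h f)"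
  by (simp add: map_mat_def qmat_def vec_eq_iff forall_3 fh_divide fh_2)

theorem lemma3p3:
  fixes f2 f1 f0 h2 h1 h0 g2 g1 g0 :: "'a::field"
    and q1 q2 q3 :: "'a^3^3"
    and \<phi> :: "'a \<Rightarrow> 'K::field"
    and \<psi> :: "'a fls \<Rightarrow> 'L::field"
  assumes char: "(2::'a) \<noteq> 0"
    and K_closed: "alg_closed_type TYPE('K)" and \<phi>_hom: "field_hom \<phi>"
    and L_closed: "alg_closed_type TYPE('L)" and \<psi>_hom: "field_hom \<psi>"
    and C_smooth: "quartic_C_smooth (\<phi> f2) (\<phi> f1) (\<phi> f0) (\<phi> h2) (\<phi> h1) (\<phi> h0)
                     (\<phi> g2) (\<phi> g1) (\<phi> g0)"
    and D_smooth: "curve_D_smooth (\<phi> f2) (\<phi> f1) (\<phi> f0) (\<phi> h2) (\<phi> h1) (\<phi> h0)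
                     (\<phi> g2) (\<phi> g1) (\<phi> g0)"
    and A_inv: "det (vector [vector [f2, f1, f0], vector [h2, h1, h0], vector [g2, g1, g0]]
                  :: 'a^3^3) \<noteq> 0"
    and q_def1: "smat f2 q1 + smat f1 q2 + smat f0 q3 = qmat 0 0 0 1 0 0"
    and q_def2: "smat h2 q1 + smat h1 q2 + smat h0 q3 = qmat 0 1 0 0 1 0"
    and q_def3: "smat g2 q1 + smat g1 q2 + smat g0 q3 = qmat 0 0 0 0 0 1"
  shows "X_smooth (map_mat \<phi> q1) (map_mat \<phi> q2) (map_mat \<phi> q3)
       \<and> X_connected (map_mat \<phi> q1) (map_mat \<phi> q2) (map_mat \<phi> q3)
       \<and> X_smooth (map_mat \<psi> (Qeps q1 (qmat 0 1 1 0 0 0)))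
                  (map_mat \<psi> (Qeps q2 (qmat 1 0 0 0 0 0)))
                  (map_mat \<psi> (Qeps q3 (qmat 0 1 (-1) 0 0 0)))
       \<and> X_connected (map_mat \<psi> (Qeps q1 (qmat 0 1 1 0 0 0)))
                  (map_mat \<psi> (Qeps q2 (qmat 1 0 0 0 0 0)))
                  (map_mat \<psi> (Qeps q3 (qmat 0 1 (-1) 0 0 0)))"
proof -
  have hom0: "\<phi> 0 = 0" using \<phi>_hom by (rule fh_0)
  have hom1: "\<phi> 1 = 1" using \<phi>_hom by (rule fh_1)
  have twoK: "(2::'K) \<noteq> 0" using fh_nz[OF \<phi>_hom char] fh_2[OF \<phi>_hom] by simp
  define Qk1 where "Qk1 = map_mat \<phi> q1"
  define Qk2 where "Qk2 = map_mat \<phi> q2"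
  define Qk3 where "Qk3 = map_mat \<phi> q3"
  have e1: "smat (\<phi> f2) Qk1 + smat (\<phi> f1) Qk2 + smat (\<phi> f0) Qk3 = qmat 0 0 0 1 0 0"
    using arg_cong[OF q_def1, of "map_mat \<phi>"] unfolding map_mat_smat3[OF \<phi>_hom] map_mat_qmat[OF \<phi>_hom]
    by (simp add: Qk1_def Qk2_def Qk3_def hom0 hom1)
  have e2: "smat (\<phi> h2) Qk1 + smat (\<phi> h1) Qk2 + smat (\<phi> h0) Qk3 = qmat 0 1 0 0 1 0"
    using arg_cong[OF q_def2, of "map_mat \<phi>"] unfolding map_mat_smat3[OF \<phi>_hom] map_mat_qmat[OF \<phi>_hom]
    by (simp add: Qk1_def Qk2_def Qk3_def hom0 hom1)
  have e3: "smat (\<phi> g2) Qk1 + smat (\<phi> g1) Qk2 + smat (\<phi> g0) Qk3 = qmat 0 0 0 0 0 1"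
    using arg_cong[OF q_def3, of "map_mat \<phi>"] unfolding map_mat_smat3[OF \<phi>_hom] map_mat_qmat[OF \<phi>_hom]
    by (simp add: Qk1_def Qk2_def Qk3_def hom0 hom1)
  have e1': "smat (\<phi> f0) Qk3 + smat (\<phi> f1) Qk2 + smat (\<phi> f2) Qk1 = qmat 0 0 0 1 0 0"
    using e1 by (simp add: ac_simps)
  have e2': "smat (\<phi> h0) Qk3 + smat (\<phi> h1) Qk2 + smat (\<phi> h2) Qk1 = qmat 0 1 0 0 1 0"
    using e2 by (simp add: ac_simps)
  have e3': "smat (\<phi> g0) Qk3 + smat (\<phi> g1) Qk2 + smat (\<phi> g2) Qk1 = qmat 0 0 0 0 0 1"
    using e3 by (simp add: ac_simps)
  have sz: "affine_dc_smooth (chart_z1 Qk1 Qk2 Qk3)"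
    by (rule core[OF twoK C_smooth D_smooth e1 e2 e3])
  have sx: "affine_dc_smooth (chart_x1 Qk1 Qk2 Qk3)"
    unfolding chart_x1_swap by (rule core[OF twoK C_swap[OF C_smooth] D_swap[OF D_smooth] e1' e2' e3'])
  have XK: "X_smooth Qk1 Qk2 Qk3" using sz sx by (simp add: X_smooth_def)
  have CK: "X_connected Qk1 Qk2 Qk3" by (rule smooth_connected[OF K_closed XK])
  have sz': "affine_dc_smooth (map_poly \<phi> (chart_z1 q1 q2 q3))"
    using sz unfolding Qk1_def Qk2_def Qk3_def chart_z1_hom[OF \<phi>_hom] .
  have sx': "affine_dc_smooth (map_poly \<phi> (chart_z1 q3 q2 q1))"
    using sx unfolding Qk1_def Qk2_def Qk3_def chart_x1_swap chart_z1_hom[OF \<phi>_hom] .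
  have nd1: "\<forall>G. degree G > 0 \<longrightarrow> \<not> (G dvd chart_z1 q1 q2 q3 \<and> G dvd pderiv (chart_z1 q1 q2 q3))"
    by (rule nodiv_from[OF \<phi>_hom K_closed sz'])
  have nd2: "\<forall>G. degree G > 0 \<longrightarrow> \<not> (G dvd chart_z1 q3 q2 q1 \<and> G dvd pderiv (chart_z1 q3 q2 q1))"
    by (rule nodiv_from[OF \<phi>_hom K_closed sx'])
  have cf1: "\<not> (coeff (chart_z1 q1 q2 q3) 6 = 0 \<and> coeff (chart_z1 q1 q2 q3) 5 = 0)"
    using coef_from[OF \<phi>_hom sx'] chart_z1_coeff_swap[where A=q3 and B=q2 and C=q1] by simp
  have cf2: "\<not> (coeff (chart_z1 q3 q2 q1) 6 = 0 \<and> coeff (chart_z1 q3 q2 q1) 5 = 0)"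
    using coef_from[OF \<phi>_hom sz'] chart_z1_coeff_swap[where A=q1 and B=q2 and C=q3] by simp
  define E1 where "E1 = map_mat \<psi> (Qeps q1 (qmat 0 1 1 0 0 0))"
  define E2 where "E2 = map_mat \<psi> (Qeps q2 (qmat 1 0 0 0 0 0))"
  define E3 where "E3 = map_mat \<psi> (Qeps q3 (qmat 0 1 (-1) 0 0 0))"
  have gz: "affine_dc_smooth (chart_z1 E1 E2 E3)"
    unfolding E1_def E2_def E3_def by (rule generic[OF char \<psi>_hom nd1 cf1])
  have gx: "affine_dc_smooth (chart_x1 E1 E2 E3)"
    unfolding E1_def E2_def E3_def chart_x1_swap by (rule generic[OF char \<psi>_hom nd2 cf2])
  have XL: "X_smooth E1 E2 E3" using gz gx by (simp add: X_smooth_def)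
  have CL: "X_connected E1 E2 E3" by (rule smooth_connected[OF L_closed XL])
  show ?thesis using XK CK XL CL by (simp add: Qk1_def Qk2_def Qk3_def E1_def E2_def E3_def)
qed


end
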